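(* Let $f:\mathbb{R}^n\to\mathbb{R}$ be a polynomial of degree $d$. Assume that $0$ is an isolated zero of $f$ (in particular $f(0)=0$) and that there is $\epsilon_0>0$ such that $\langle\nabla f(x),x\rangle\neq0$ for all $x\in B(0,\epsilon_0)\setminus\{0\}$. Then $|f(ux)|\leq|f(x)|$ for all $u\in[0,1]$ and all $x\in B(0,\epsilon_0)$. In particular, for every $t\geq0$ the sub-level set $\{x\in B(0,\epsilon_0): |f(x)|\leq t\}$ is star-shaped with respect to $0$.
   Context: $B(0,r)$ denotes the open Euclidean ball of radius $r$ centered at $0$, and $\langle\cdot,\cdot\rangle$ the Euclidean inner product. *)

theory Defs
  imports "HOL-Analysis.Analysis"
begin

definition monom_fun :: "('n::finite \<Rightarrow> nat) \<Rightarrow> real^'n \<Rightarrow> real" where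
  "monom_fun \<alpha> x = (\<Prod>i\<in>UNIV. (x $ i) ^ (\<alpha> i))"

definition mdeg :: "('n::finite \<Rightarrow> nat) \<Rightarrow> nat" where
  "mdeg \<alpha> = (\<Sum>i\<in>UNIV. \<alpha> i)"

definition poly_fun_le :: "nat \<Rightarrow> (real^'n::finite \<Rightarrow> real) \<Rightarrow> bool" where
  "poly_fun_le d f \<longleftrightarrow>
     (\<exists>c :: ('n \<Rightarrow> nat) \<Rightarrow> real.
        finite {\<alpha>. c \<alpha> \<noteq> 0} \<and> (\<forall>\<alpha>. c \<alpha> \<noteq> 0 \<longrightarrow> mdeg \<alpha> \<le> d) \<and>
        f = (\<lambda>x. \<Sum>\<alpha>\<in>{\<alpha>. c \<alpha> \<noteq> 0}. c \<alpha> * monom_fun \<alpha> x))"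

definition is_poly_fun :: "(real^'n::finite \<Rightarrow> real) \<Rightarrow> bool" where
  "is_poly_fun f \<longleftrightarrow> (\<exists>d. poly_fun_le d f)"

definition poly_fun_degree :: "(real^'n::finite \<Rightarrow> real) \<Rightarrow> nat" where
  "poly_fun_degree f = (LEAST d. poly_fun_le d f)"

end

theory Submission
  imports Defs
begin

lemma differentiable_prod':
  fixes f :: "'i \<Rightarrow> 'a::real_normed_vector \<Rightarrow> real"
  assumes "\<And>i. i \<in> I \<Longrightarrow> f i differentiable (at x)"
  shows "(\<lambda>x. \<Prod>i\<in>I. f i x) differentiable (at x)"
proof -
  have "\<forall>i\<in>I. \<exists>f'. (f i has_derivative f') (at x)"
    using assms unfolding differentiable_def by blast
  from bchoice[OF this] obtain f' where "\<forall>i\<in>I. (f i has_derivative f' i) (at x)" by (elim exE) (rule that)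
  note fd = this
  have "((\<lambda>x. \<Prod>i\<in>I. f i x) has_derivative (\<lambda>y. \<Sum>i\<in>I. f' i y * (\<Prod>j\<in>I - {i}. f j x))) (at x)"
    by (rule has_derivative_prod, erule fd[rule_format])
  thus ?thesis unfolding differentiable_def by blast
qed

lemma polydiff: assumes "is_poly_fun f" shows "f differentiable (at y)"
proof -
  from assms obtain d where "poly_fun_le d f" unfolding is_poly_fun_def by (elim exE) (rule that)
  then obtain c where c: "finite {\<alpha>. c \<alpha> \<noteq> 0} \<and> (\<forall>\<alpha>. c \<alpha> \<noteq> 0 \<longrightarrow> mdeg \<alpha> \<le> d) \<and>
        f = (\<lambda>x. \<Sum>\<alpha>\<in>{\<alpha>. c \<alpha> \<noteq> 0}. c \<alpha> * monom_fun \<alpha> x)"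
    unfolding poly_fun_le_def by (elim exE) (rule that)
  have fin: "finite {\<alpha>. c \<alpha> \<noteq> 0}" using c by (rule conjunct1)
  have f: "f = (\<lambda>x. \<Sum>\<alpha>\<in>{\<alpha>. c \<alpha> \<noteq> 0}. c \<alpha> * monom_fun \<alpha> x)"
    using c by (rule conjunct2[THEN conjunct2])
  have nth: "(\<lambda>x. x$i) differentiable (at y)" for i
    unfolding differentiable_def by (rule exI, rule bounded_linear_imp_has_derivative[OF bounded_linear_vec_nth])
  show ?thesis unfolding f monom_fun_def
    apply (rule differentiable_sum[OF fin])
    apply (intro ballI)
    apply (rule differentiable_mult[OF differentiable_const])
    apply (rule differentiable_prod')
    apply (rule differentiable_power[OF nth])
    done
qed
lemma grad_ex: fixes f :: "real^'n \<Rightarrow> real"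
  assumes "f differentiable (at y)" shows "\<exists>D. GDERIV f y :> D"
proof -
  obtain f' where f': "(f has_derivative f') (at y)" using assms unfolding differentiable_def by blast
  have lin: "linear f'" using f' has_derivative_linear by blast
  define D where "D = (\<Sum>i\<in>Basis. f' i *\<^sub>R i)"
  have "f' = (\<lambda>h. D \<bullet> h)"
  proof
    fix h
    have "f' h = f' h \<bullet> 1" by simp
    also have "\<dots> = (\<Sum>i\<in>Basis. (h\<bullet>i) * (f' i \<bullet> 1))" by (rule Linear_Algebra.linear_componentwise[OF lin])
    also have "\<dots> = (\<Sum>i\<in>Basis. f' i * (i \<bullet> h))" 
      by (intro sum.cong refl) (simp add: inner_commute[of h])
    also have "\<dots> = D \<bullet> h" unfolding D_def inner_sum_left inner_scaleR_left ..
    finally show "f' h = D \<bullet> h" .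
  qed
  hence fD: "f' = (\<lambda>h. h \<bullet> D)" by (metis inner_commute)
  have "GDERIV f y :> D" unfolding gderiv_def using f' unfolding fD .
  thus ?thesis ..
qed


lemma main_ineq:
  fixes f :: "real^'n \<Rightarrow> real" and \<epsilon>0 :: real
  assumes poly: "is_poly_fun f" and zero: "f 0 = 0"
    and grad: "\<forall>x\<in>ball 0 \<epsilon>0 - {0}. \<forall>D. (GDERIV f x :> D) \<longrightarrow> inner D x \<noteq> 0"
    and x: "x \<in> ball 0 \<epsilon>0" and u: "u \<in> {0..1}"
  shows "\<bar>f (u *\<^sub>R x)\<bar> \<le> \<bar>f x\<bar>"
proof (cases "x = 0")
  case True thus ?thesis by simp
next
  case xnz: False
  have ex: "\<forall>y. \<exists>D. GDERIV f y :> D" using grad_ex[OF polydiff[OF poly]] by blast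
  from choice[OF ex] obtain Df where Df0: "\<forall>y. GDERIV f y :> Df y" by (elim exE) (rule that)
  have Df: "GDERIV f y :> Df y" for y using Df0 by (rule spec)
  define g where "g = (\<lambda>u::real. f (u *\<^sub>R x))"
  have gd: "(g has_derivative (\<lambda>v. v * (x \<bullet> Df (t *\<^sub>R x)))) (at t)" for t
  proof -
    have h1: "((\<lambda>u::real. u *\<^sub>R x) has_derivative (\<lambda>v. v *\<^sub>R x)) (at t)"
      by (rule bounded_linear_imp_has_derivative[OF bounded_linear_scaleR_left])
    have h2: "(f has_derivative (\<lambda>h. h \<bullet> Df (t *\<^sub>R x))) (at (t *\<^sub>R x))"
      using Df[of "t *\<^sub>R x"] unfolding gderiv_def .
    from has_derivative_compose[OF h1 h2] show ?thesis unfolding g_def by simp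
  qed
  have cont: "continuous_on {0..1} g"
    by (intro continuous_at_imp_continuous_on ballI has_derivative_continuous[OF gd])
  have inj: "inj_on g {0..1}"
  proof (rule ccontr)
    assume "\<not> inj_on g {0..1}"
    then obtain a b where ab: "a \<in> {0..1}" "b \<in> {0..1}" "a \<noteq> b" "g a = g b"
      unfolding inj_on_def by blast
    have "\<exists>a b. 0 \<le> a \<and> a < b \<and> b \<le> 1 \<and> g a = g b"
    proof (cases "a < b")
      case True thus ?thesis using ab by (intro exI[of _ a] exI[of _ b]) auto
    next
      case False thus ?thesis using ab by (intro exI[of _ b] exI[of _ a]) auto
    qed
    then obtain a b where ab2: "0 \<le> a" "a < b" "b \<le> 1" "g a = g b" by (elim exE conjE) (rule that)
    have cab: "continuous_on {a..b} g" using cont by (rule continuous_on_subset) (use ab2 in auto)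
    have "\<exists>z. a < z \<and> z < b \<and> (\<lambda>v. v * (x \<bullet> Df (z *\<^sub>R x))) = (\<lambda>v. 0)"
      by (rule Rolle_deriv[of a b g, OF ab2(2) ab2(4) cab gd])
    then obtain z where z: "a < z" "z < b" "(\<lambda>v. v * (x \<bullet> Df (z *\<^sub>R x))) = (\<lambda>v. 0)"
      by (elim exE conjE) (rule that)
    have z0: "x \<bullet> Df (z *\<^sub>R x) = 0" using fun_cong[OF z(3), of 1] by simp
    have "z *\<^sub>R x \<in> ball 0 \<epsilon>0 - {0}"
    proof -
      have "norm (z *\<^sub>R x) = z * norm x" using z ab2 by simp
      also have "\<dots> \<le> norm x" using z ab2 by (simp add: mult_left_le_one_le)
      finally have n1: "norm (z *\<^sub>R x) \<le> norm x" .
      have n2: "norm x < \<epsilon>0" using x by simp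
      have "norm (z *\<^sub>R x) < \<epsilon>0" using n1 n2 by linarith
      moreover have "z *\<^sub>R x \<noteq> 0" using xnz z ab2 by simp
      ultimately show ?thesis by simp
    qed
    from grad[rule_format, OF this Df] have "inner (Df (z *\<^sub>R x)) (z *\<^sub>R x) \<noteq> 0" .
    moreover have "inner (Df (z *\<^sub>R x)) (z *\<^sub>R x) = z * (x \<bullet> Df (z *\<^sub>R x))"
      by (simp add: inner_commute)
    ultimately show False using z0 by simp
  qed
  have g0: "g 0 = 0" unfolding g_def using zero by simp
  have "\<bar>g u\<bar> \<le> \<bar>g 1\<bar>"
  proof (cases "u = 0 \<or> u = 1")
    case True thus ?thesis using g0 by auto
  next
    case False
    hence "0 < u" "u < 1" using u by auto
    from continuous_inj_imp_mono[OF this cont inj] show ?thesis using g0 by auto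
  qed
  thus ?thesis unfolding g_def by simp
qed

theorem lemma3:
  fixes f :: "real^'n \<Rightarrow> real" and d :: nat and \<epsilon>0 :: real
  assumes poly: "is_poly_fun f" and deg: "poly_fun_degree f = d"
    and zero: "f 0 = 0"
    and isolated: "\<exists>r>0. \<forall>x\<in>ball 0 r. x \<noteq> 0 \<longrightarrow> f x \<noteq> 0"
    and eps: "\<epsilon>0 > 0"
    and grad: "\<forall>x\<in>ball 0 \<epsilon>0 - {0}. \<forall>D. (GDERIV f x :> D) \<longrightarrow> inner D x \<noteq> 0"
  shows "(\<forall>u\<in>{0..1}. \<forall>x\<in>ball 0 \<epsilon>0. \<bar>f (u *\<^sub>R x)\<bar> \<le> \<bar>f x\<bar>) \<and>
         (\<forall>t\<ge>0. \<forall>x\<in>{x\<in>ball 0 \<epsilon>0. \<bar>f x\<bar> \<le> t}.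
             closed_segment 0 x \<subseteq> {x\<in>ball 0 \<epsilon>0. \<bar>f x\<bar> \<le> t})"
proof (intro conjI ballI allI impI subsetI)
  fix u x assume "u \<in> {0..1::real}" "x \<in> ball (0::real^'n) \<epsilon>0"
  thus "\<bar>f (u *\<^sub>R x)\<bar> \<le> \<bar>f x\<bar>" by (rule main_ineq[OF poly zero grad, rotated])
next
  fix t :: real and x y
  assume x: "x \<in> {x \<in> ball 0 \<epsilon>0. \<bar>f x\<bar> \<le> t}" and y: "y \<in> closed_segment 0 x"
  from y obtain u where u: "0 \<le> u" "u \<le> 1" "y = u *\<^sub>R x"
    unfolding closed_segment_def by auto
  have "norm y = u * norm x" using u by simp
  also have "\<dots> \<le> norm x" using u by (simp add: mult_left_le_one_le)
  finally have n1: "norm y \<le> norm x" .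
  have n2: "norm x < \<epsilon>0" using x by simp
  have "norm y < \<epsilon>0" using n1 n2 by linarith
  hence "y \<in> ball 0 \<epsilon>0" by simp
  moreover have "\<bar>f (u *\<^sub>R x)\<bar> \<le> \<bar>f x\<bar>" using main_ineq[OF poly zero grad] x u(1,2) by simp
  hence "\<bar>f y\<bar> \<le> t" using x u(3) by simp
  ultimately show "y \<in> {x \<in> ball 0 \<epsilon>0. \<bar>f x\<bar> \<le> t}" by simp
qed

end
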